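(* Let $n\ge1$ and $\mathbf{x}\in\{0,1\}^n$. Let $\omega=\omega(\mathbf{x}')$, let $m$ be the number of 1-runs in $\mathbf{x}'$, and for $i=1,2$ let $m_i$ be the number of 1-runs of $\mathbf{x}'$ of length $i$. For $j=0,1,\dots,6$ let $B_j$ be the number of $\mathbf{y}\in\Phi_3(\mathbf{x})$ with $\omega(\mathbf{y}')=\omega-j$. Then (a) $B_0+B_1=1+m+\binom{m}{2}+\binom{m}{3}$; (b) $B_2+B_3=(\omega-m)\bigl(1+m+\binom{m}{2}\bigr)-m(m-m_1)$; (c) $B_4+B_5=(1+m)\left[\binom{\omega-m}{2}-(\omega-m)\right]-(\omega-2m-3)(m-m_1)-m_2$; (d) $B_6=\binom{\omega-m}{3}-(\omega-m)(\omega-m+1)+(\omega-m)(m-m_1)+4(\omega-2m+m_1)+m_2$.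
   Context: A grain pattern of length $n$ is a subset $E\subseteq\{2,\dots,n\}$ containing no two consecutive integers. For such $E$, $\phi_E:\{0,1\}^n\to\{0,1\}^n$ sends $\mathbf{x}=(x_1,\dots,x_n)$ to $\mathbf{y}$ with $y_j=x_{j-1}$ if $j\in E$ and $y_j=x_j$ otherwise. $\Phi_t(\mathbf{x})=\{\phi_E(\mathbf{x}): E \text{ a grain pattern of length } n,\ |E|\le t\}$ (a set). The derivative sequence of $\mathbf{x}$ is $\mathbf{x}'=(x'_2,\dots,x'_n)$ with $x'_j=x_{j-1}\oplus x_j$ (mod 2); $\omega(\cdot)$ is Hamming weight; a 1-run of $\mathbf{x}'$ is a maximal block of consecutive 1s. Binomial coefficients $\binom{a}{b}$ are $0$ when $b>a\ge0$. *)

theory Defs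
  imports Main
begin

text \<open>Binary words of length n are bool lists x with length x = n; the paper's
 x_j (1-indexed) is x ! (j - 1).\<close>

definition grain_pattern :: "nat \<Rightarrow> nat set \<Rightarrow> bool" where
  "grain_pattern n E \<longleftrightarrow> E \<subseteq> {2..n} \<and> (\<forall>j\<in>E. Suc j \<notin> E)"

definition phi :: "nat \<Rightarrow> nat set \<Rightarrow> bool list \<Rightarrow> bool list" where
  "phi n E x = map (\<lambda>j. if j \<in> E then x ! (j - 2) else x ! (j - 1)) [1..<n+1]"

definition Phi :: "nat \<Rightarrow> nat \<Rightarrow> bool list \<Rightarrow> bool list set" where
  "Phi n t x = {phi n E x | E. grain_pattern n E \<and> card E \<le> t}"

text \<open>Derivative sequence: entry k (0-indexed) is x'_(k+2) = x_(k+1) xor x_(k+2).\<close>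
definition deriv_seq :: "bool list \<Rightarrow> bool list" where
  "deriv_seq x = map (\<lambda>(a, b). a \<noteq> b) (zip x (tl x))"

definition weight :: "bool list \<Rightarrow> nat" where
  "weight w = length (filter id w)"

text \<open>1-runs as pairs (a,b) of 0-indexed start/end positions of a maximal block of 1s.\<close>
definition one_runs :: "bool list \<Rightarrow> (nat \<times> nat) set" where
  "one_runs w = {(a, b). a \<le> b \<and> b < length w \<and> (\<forall>k\<in>{a..b}. w ! k)
      \<and> (a = 0 \<or> \<not> w ! (a - 1)) \<and> (Suc b = length w \<or> \<not> w ! Suc b)}"

definition num_runs_len :: "bool list \<Rightarrow> nat \<Rightarrow> nat" where
  "num_runs_len w i = card {(a, b) \<in> one_runs w. Suc b - a = i}"

end

theory Submission
  imports Defs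
begin


definition Vs :: "bool list \<Rightarrow> nat set set" where
  "Vs d = {S. S \<subseteq> {p. p < length d \<and> d ! p} \<and> (\<forall>p\<in>S. Suc p \<notin> S)}"

definition Ic :: "bool list \<Rightarrow> nat set \<Rightarrow> nat" where
  "Ic d S = card {p\<in>S. Suc p < length d \<and> d ! Suc p}"

definition FF :: "bool list \<Rightarrow> nat \<Rightarrow> nat \<Rightarrow> nat" where
  "FF d a k = card {S\<in>Vs d. card S = a \<and> Ic d S = k}"

lemma Vs_fin: "S \<in> Vs d \<Longrightarrow> finite S"
  unfolding Vs_def by (auto intro: finite_subset[of _ "{..<length d}"])

lemma finite_Vs: "finite (Vs d)"
proof -
  have "Vs d \<subseteq> Pow {..<length d}" unfolding Vs_def by auto
  thus ?thesis by (rule finite_subset) auto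
qed

lemma Ic_le: "S \<in> Vs d \<Longrightarrow> Ic d S \<le> card S"
  unfolding Ic_def by (rule card_mono) (auto dest: Vs_fin)

lemma FF_zero: "a < k \<Longrightarrow> FF d a k = 0"
proof -
  assume "a < k"
  hence "{S\<in>Vs d. card S = a \<and> Ic d S = k} = {}" using Ic_le by fastforce
  thus ?thesis unfolding FF_def by (metis card.empty)
qed

lemma Ic_Suc: "Ic (c # r) (Suc ` S) = Ic r S"
proof -
  have "{p\<in>Suc ` S. Suc p < length (c#r) \<and> (c#r) ! Suc p} = Suc ` {p\<in>S. Suc p < length r \<and> r ! Suc p}"
    by auto
  thus ?thesis unfolding Ic_def by (simp add: card_image)
qed

lemma Vs_shift: "{S\<in>Vs (c#r). 0 \<notin> S} = (image Suc) ` Vs r"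
proof
  show "{S\<in>Vs (c#r). 0 \<notin> S} \<subseteq> (image Suc) ` Vs r"
  proof
    fix S assume S: "S \<in> {S\<in>Vs (c#r). 0 \<notin> S}"
    let ?S' = "{q. Suc q \<in> S}"
    have e: "S = Suc ` ?S'" using S by (auto simp: image_iff) (metis not0_implies_Suc)
    have "?S' \<in> Vs r" using S unfolding Vs_def by auto
    thus "S \<in> (image Suc) ` Vs r" using e by blast
  qed
next
  show "(image Suc) ` Vs r \<subseteq> {S\<in>Vs (c#r). 0 \<notin> S}"
    unfolding Vs_def by auto
qed

lemma G_lemma: "card {S\<in>Vs (c#r). 0 \<notin> S \<and> P (card S) (Ic (c#r) S)} = card {S\<in>Vs r. P (card S) (Ic r S)}"
proof -
  have "{S\<in>Vs (c#r). 0 \<notin> S \<and> P (card S) (Ic (c#r) S)} = (image Suc) ` {S\<in>Vs r. P (card S) (Ic r S)}"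
  proof -
    have "{S\<in>Vs (c#r). 0 \<notin> S \<and> P (card S) (Ic (c#r) S)} = {S\<in>{S\<in>Vs (c#r). 0 \<notin> S}. P (card S) (Ic (c#r) S)}"
      by auto
    also have "\<dots> = {S\<in>(image Suc) ` Vs r. P (card S) (Ic (c#r) S)}" by (simp only: Vs_shift)
    also have "\<dots> = (image Suc) ` {S\<in>Vs r. P (card S) (Ic r S)}"
      by (auto simp: Ic_Suc card_image)
    finally show ?thesis .
  qed
  moreover have "inj_on (image Suc) X" for X :: "nat set set"
    by (auto simp: inj_on_def inj_image_eq_iff)
  ultimately show ?thesis by (simp add: card_image)
qed

lemma Ic_ins: assumes "finite S"
  shows "Ic (c # r) (insert 0 (Suc ` S)) = Ic r S + (if 0 < length r \<and> r ! 0 then 1 else 0)"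
proof -
  let ?X = "Suc ` {p\<in>S. Suc p < length r \<and> r ! Suc p}"
  have fX: "finite ?X" using assms by auto
  have z: "0 \<notin> ?X" by auto
  have cX: "card ?X = Ic r S" unfolding Ic_def by (simp add: card_image)
  show ?thesis
  proof (cases "0 < length r \<and> r ! 0")
    case True
    have "{p\<in>insert 0 (Suc ` S). Suc p < length (c#r) \<and> (c#r) ! Suc p} = insert 0 ?X"
      using True by auto
    thus ?thesis using True fX z cX unfolding Ic_def by simp
  next
    case False
    have "{p\<in>insert 0 (Suc ` S). Suc p < length (c#r) \<and> (c#r) ! Suc p} = ?X"
      using False by auto
    thus ?thesis using False cX unfolding Ic_def by simp
  qed
qed

lemma H_lemma: "card {S\<in>Vs (True#r). 0 \<in> S \<and> P (card S) (Ic (True#r) S)} =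
   card {S\<in>Vs r. 0 \<notin> S \<and> P (Suc (card S)) (Ic r S + (if 0 < length r \<and> r ! 0 then 1 else 0))}"
proof -
  let ?e = "(if 0 < length r \<and> r ! 0 then 1 else 0) :: nat"
  let ?f = "\<lambda>S. insert 0 (Suc ` S)"
  have inj: "inj_on ?f X" for X :: "nat set set"
  proof
    fix A B assume "A \<in> X" "B \<in> X" "?f A = ?f B"
    hence "Suc ` A = Suc ` B"
      by (metis Zero_not_Suc image_iff insert_ident)
    thus "A = B" by (simp add: inj_image_eq_iff)
  qed
  have "{S\<in>Vs (True#r). 0 \<in> S \<and> P (card S) (Ic (True#r) S)} = ?f ` {S\<in>Vs r. 0 \<notin> S \<and> P (Suc (card S)) (Ic r S + ?e)}"
  proof
    show "{S\<in>Vs (True#r). 0 \<in> S \<and> P (card S) (Ic (True#r) S)} \<subseteq> ?f ` {S\<in>Vs r. 0 \<notin> S \<and> P (Suc (card S)) (Ic r S + ?e)}"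
    proof
      fix S assume S: "S \<in> {S\<in>Vs (True#r). 0 \<in> S \<and> P (card S) (Ic (True#r) S)}"
      let ?S' = "{q. Suc q \<in> S}"
      have e: "S = ?f ?S'" using S by (auto simp: image_iff) (metis not0_implies_Suc)
      have v: "?S' \<in> Vs r" using S unfolding Vs_def by auto
      have z: "0 \<notin> ?S'" using S unfolding Vs_def by auto
      have fin: "finite ?S'" using v by (rule Vs_fin)
      have "card S = Suc (card ?S')" using e fin by (metis card_image card_insert_disjoint finite_imageI inj_Suc inj_on_subset subset_UNIV imageE nat.distinct(1))
      moreover have "Ic (True#r) S = Ic r ?S' + ?e" using e fin Ic_ins by metis
      ultimately have "P (Suc (card ?S')) (Ic r ?S' + ?e)" using S by simp
      thus "S \<in> ?f ` {S\<in>Vs r. 0 \<notin> S \<and> P (Suc (card S)) (Ic r S + ?e)}" using v z e by blast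
    qed
  next
    show "?f ` {S\<in>Vs r. 0 \<notin> S \<and> P (Suc (card S)) (Ic r S + ?e)} \<subseteq> {S\<in>Vs (True#r). 0 \<in> S \<and> P (card S) (Ic (True#r) S)}"
    proof
      fix T assume "T \<in> ?f ` {S\<in>Vs r. 0 \<notin> S \<and> P (Suc (card S)) (Ic r S + ?e)}"
      then obtain S where T: "T = ?f S" and S: "S \<in> Vs r" "0 \<notin> S" "P (Suc (card S)) (Ic r S + ?e)" by blast
      have fin: "finite S" using S(1) by (rule Vs_fin)
      have "card T = Suc (card S)" using T fin by (simp add: card_image)
      moreover have "Ic (True#r) T = Ic r S + ?e" using T fin Ic_ins by metis
      moreover have "T \<in> Vs (True#r)" using T S(1,2) unfolding Vs_def by auto
      ultimately show "T \<in> {S\<in>Vs (True#r). 0 \<in> S \<and> P (card S) (Ic (True#r) S)}" using T S(3) by simp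
    qed
  qed
  thus ?thesis by (simp add: card_image inj)
qed

lemma FF_split: "FF d a k = card {S\<in>Vs d. 0 \<notin> S \<and> card S = a \<and> Ic d S = k} + card {S\<in>Vs d. 0 \<in> S \<and> card S = a \<and> Ic d S = k}"
proof -
  have "{S\<in>Vs d. card S = a \<and> Ic d S = k} = {S\<in>Vs d. 0 \<notin> S \<and> card S = a \<and> Ic d S = k} \<union> {S\<in>Vs d. 0 \<in> S \<and> card S = a \<and> Ic d S = k}" by auto
  moreover have "finite {S\<in>Vs d. 0 \<notin> S \<and> card S = a \<and> Ic d S = k}" "finite {S\<in>Vs d. 0 \<in> S \<and> card S = a \<and> Ic d S = k}"
    using finite_Vs by auto
  ultimately show ?thesis unfolding FF_def by (simp add: card_Un_disjoint[symmetric]) (subst card_Un_disjoint, auto)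
qed

lemma Vs_Nil: "Vs [] = {{}}" unfolding Vs_def by auto

lemma FF_Nil: "FF [] a k = (if a = 0 \<and> k = 0 then 1 else 0)"
proof -
  have "{S\<in>Vs []. card S = a \<and> Ic [] S = k} = (if a = 0 \<and> k = 0 then {{}} else {})"
    by (auto simp: Vs_Nil Ic_def)
  thus ?thesis unfolding FF_def by simp
qed

lemma FF_False: "FF (False # r) a k = FF r a k"
proof -
  have "{S\<in>Vs (False#r). 0 \<in> S \<and> card S = a \<and> Ic (False#r) S = k} = {}"
    unfolding Vs_def by auto
  hence "card {S\<in>Vs (False#r). 0 \<in> S \<and> card S = a \<and> Ic (False#r) S = k} = 0" by (simp only: card.empty)
  hence "FF (False # r) a k = card {S\<in>Vs (False#r). 0 \<notin> S \<and> card S = a \<and> Ic (False#r) S = k}"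
    using FF_split[of "False#r" a k] by linarith
  also have "\<dots> = FF r a k" unfolding FF_def using G_lemma[of False r "\<lambda>x y. x = a \<and> y = k"] by simp
  finally show ?thesis .
qed

lemma FF_True: "FF (True # r) a k = FF r a k +
   card {S\<in>Vs r. 0 \<notin> S \<and> Suc (card S) = a \<and> Ic r S + (if 0 < length r \<and> r ! 0 then 1 else 0) = k}"
proof -
  have 1: "card {S\<in>Vs (True#r). 0 \<notin> S \<and> card S = a \<and> Ic (True#r) S = k} = FF r a k"
    unfolding FF_def using G_lemma[of True r "\<lambda>x y. x = a \<and> y = k"] by simp
  have 2: "card {S\<in>Vs (True#r). 0 \<in> S \<and> card S = a \<and> Ic (True#r) S = k} = card {S\<in>Vs r. 0 \<notin> S \<and> Suc (card S) = a \<and> Ic r S + (if 0 < length r \<and> r ! 0 then 1 else 0) = k}"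
    using H_lemma[of r "\<lambda>x y. x = a \<and> y = k"] by simp
  show ?thesis using FF_split[of "True#r" a k] 1 2 by simp
qed

lemma FF_T_Nil: "FF [True] a k = (if a = 0 \<and> k = 0 then 1 else 0) + (if a = 1 \<and> k = 0 then 1 else 0)"
proof -
  have "{S\<in>Vs []. 0 \<notin> S \<and> Suc (card S) = a \<and> Ic [] S + (if 0 < length [] \<and> [] ! 0 then 1 else 0) = k}
     = (if a = 1 \<and> k = 0 then {{}} else {})"
    by (auto simp: Vs_Nil Ic_def)
  thus ?thesis using FF_True[of "[]" a k] FF_Nil by simp
qed

lemma FF_TF: "FF (True # False # r) a k = FF r a k + (if a \<ge> 1 then FF r (a - 1) k else 0)"
proof -
  have "card {S\<in>Vs (False#r). 0 \<notin> S \<and> Suc (card S) = a \<and> Ic (False#r) S + (if 0 < length (False#r) \<and> (False#r) ! 0 then 1 else 0) = k}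
      = card {S\<in>Vs r. Suc (card S) = a \<and> Ic r S = k}"
    using G_lemma[of False r "\<lambda>x y. Suc x = a \<and> y = k"] by simp
  also have "\<dots> = (if a \<ge> 1 then FF r (a - 1) k else 0)"
    unfolding FF_def by (cases a) auto
  finally show ?thesis using FF_True[of "False#r" a k] FF_False by simp
qed

lemma FF_TT: "FF (True # True # r) a k = FF (True # r) a k + (if a \<ge> 1 \<and> k \<ge> 1 then FF r (a - 1) (k - 1) else 0)"
proof -
  have "card {S\<in>Vs (True#r). 0 \<notin> S \<and> Suc (card S) = a \<and> Ic (True#r) S + (if 0 < length (True#r) \<and> (True#r) ! 0 then 1 else 0) = k}
      = card {S\<in>Vs r. Suc (card S) = a \<and> Ic r S + 1 = k}"
    using G_lemma[of True r "\<lambda>x y. Suc x = a \<and> y + 1 = k"] by simp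
  also have "\<dots> = (if a \<ge> 1 \<and> k \<ge> 1 then FF r (a - 1) (k - 1) else 0)"
    unfolding FF_def by (cases a; cases k) auto
  finally show ?thesis using FF_True[of "True#r" a k] by simp
qed


primrec lead :: "bool list \<Rightarrow> nat" where
  "lead [] = 0" | "lead (b#r) = (if b then Suc (lead r) else 0)"
primrec sw :: "bool list \<Rightarrow> int" where
  "sw [] = 0" | "sw (b#r) = (if b then sw r + 1 else sw r)"
primrec sm :: "bool list \<Rightarrow> int" where
  "sm [] = 0" | "sm (b#r) = (if b then sm r + (if lead r = 0 then 1 else 0) else sm r)"
primrec sm1 :: "bool list \<Rightarrow> int" where
  "sm1 [] = 0" | "sm1 (b#r) = (if b then sm1 r + (if lead r = 0 then 1 else 0) - (if lead r = 1 then 1 else 0) else sm1 r)"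
primrec sm2 :: "bool list \<Rightarrow> int" where
  "sm2 [] = 0" | "sm2 (b#r) = (if b then sm2 r + (if lead r = 1 then 1 else 0) - (if lead r = 2 then 1 else 0) else sm2 r)"

lemma list_ind2:
  assumes "P []" "\<And>r. P r \<Longrightarrow> P (False#r)" "P [True]" "\<And>r. P r \<Longrightarrow> P (True#False#r)"
    "\<And>r. P r \<Longrightarrow> P (True#r) \<Longrightarrow> P (True#True#r)"
  shows "P d"
proof (induction d rule: length_induct)
  case (1 d)
  show ?case
  proof (cases d)
    case Nil thus ?thesis using assms by simp
  next
    case (Cons b r)
    show ?thesis
    proof (cases b)
      case False thus ?thesis using assms(2) 1 Cons by simp
    next
      case True
      show ?thesis
      proof (cases r)
        case Nil thus ?thesis using assms(3) True Cons by simp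
      next
        case (Cons c s)
        show ?thesis
        proof (cases c)
          case False thus ?thesis using assms(4) 1 \<open>d = b#r\<close> Cons True by simp
        next
          case c: True thus ?thesis using assms(5) 1 \<open>d = b#r\<close> Cons True by simp
        qed
      qed
    qed
  qed
qed

definition CF :: "bool list \<Rightarrow> bool" where
  "CF d \<longleftrightarrow> (let W = sw d - sm d; M = sm d; P = sm d - sm1 d; Q = sm2 d; f = (\<lambda>a k. int (FF d a k)) in
     f 0 0 = 1 \<and> f 1 0 = M \<and> 2 * f 2 0 = M * (M - 1) \<and> 6 * f 3 0 = M * (M - 1) * (M - 2)
     \<and> f 1 1 = W \<and> f 2 1 = W * M - P \<and> 2 * f 3 1 = W * M * (M - 1) - 2 * P * (M - 1)
     \<and> 2 * f 2 2 = W * (W - 1) - 2 * (W - P)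
     \<and> 2 * f 3 2 = M * (W * (W - 1) - 2 * W + 2 * P) - 2 * P * (W - 2) - 2 * Q
     \<and> 6 * f 3 3 = W * (W - 1) * (W - 2) - 6 * W * (W + 1) + 6 * W * P + 24 * (W - P) + 6 * Q)"

lemma CF_all: "CF d"
proof (induction d rule: list_ind2)
  case 1
  then show ?case unfolding CF_def by (simp add: FF_Nil)
next
  case (2 r)
  then show ?case unfolding CF_def by (simp add: FF_False)
next
  case 3
  then show ?case unfolding CF_def by (simp add: FF_T_Nil FF_Nil)
next
  case (4 r)
  then show ?case unfolding CF_def Let_def by (simp add: FF_TF FF_zero algebra_simps)
next
  case (5 r)
  then show ?case unfolding CF_def Let_def
    by (cases "lead r = 0"; cases "lead r = 1"; cases "lead r = 2"; simp add: FF_TT FF_zero algebra_simps)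
qed


lemma lead_le: "lead r \<le> length r" by (induction r) auto
lemma lead_nth: "k < lead r \<Longrightarrow> r ! k"
  by (induction r arbitrary: k) (auto simp: nth_Cons split: if_splits nat.splits)
lemma lead_stop: "lead r < length r \<Longrightarrow> \<not> r ! lead r"
  by (induction r) (auto split: if_splits)
lemma lead_max: "j \<le> length r \<Longrightarrow> (\<forall>k<j. r ! k) \<Longrightarrow> j \<le> lead r"
proof (rule ccontr)
  assume "j \<le> length r" "\<forall>k<j. r ! k" "\<not> j \<le> lead r"
  thus False using lead_stop[of r] lead_le[of r] by auto
qed

lemma ball_Suc: "(\<forall>k\<in>{Suc a..Suc b}. P k) \<longleftrightarrow> (\<forall>k\<in>{a..b}. P (Suc k))"
  by (auto, metis Suc_le_D Suc_le_mono atLeastAtMost_iff)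

lemma ball_Suc2: "(\<forall>k\<in>{Suc a..Suc b}. (c#r) ! k) \<longleftrightarrow> (\<forall>k\<in>{a..b}. r ! k)"
  by (simp add: ball_Suc)

lemma runs_Suc: "(Suc a, Suc b) \<in> one_runs (c#r) \<longleftrightarrow> (a,b) \<in> one_runs r \<and> (a = 0 \<longrightarrow> \<not> c)"
proof -
  have "(Suc a, Suc b) \<in> one_runs (c#r) \<longleftrightarrow> a \<le> b \<and> b < length r \<and> (\<forall>k\<in>{a..b}. r ! k)
      \<and> \<not> (c#r) ! a \<and> (Suc b = length r \<or> \<not> r ! Suc b)"
    unfolding one_runs_def by (simp only: ball_Suc2 mem_Collect_eq case_prod_conv) auto
  also have "\<dots> \<longleftrightarrow> (a,b) \<in> one_runs r \<and> (a = 0 \<longrightarrow> \<not> c)"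
    unfolding one_runs_def by (cases a) auto
  finally show ?thesis .
qed

lemma runs_Suc0: "(Suc a, 0) \<notin> one_runs (c#r)"
  unfolding one_runs_def by auto

lemma runs_0F: "(0, b) \<notin> one_runs (False#r)"
proof
  assume "(0, b) \<in> one_runs (False#r)"
  hence "\<forall>k\<in>{0..b}. (False#r) ! k" unfolding one_runs_def by auto
  from bspec[OF this, of 0] show False by simp
qed

lemma runs_0T: "(0, b) \<in> one_runs (True#r) \<longleftrightarrow> b = lead r"
proof
  assume "(0, b) \<in> one_runs (True#r)"
  hence h: "b \<le> length r" "\<forall>k\<in>{0..b}. (True#r) ! k" "b = length r \<or> \<not> r ! b"
    unfolding one_runs_def by auto
  have "\<forall>k<b. r ! k" using h(2) by (metis atLeastAtMost_iff le0 less_eq_Suc_le nth_Cons_Suc)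
  hence "b \<le> lead r" using lead_max h(1) by blast
  moreover have "lead r \<le> b" using h(3) lead_le[of r] lead_nth[of b r] by (metis linorder_not_le)
  ultimately show "b = lead r" by simp
next
  assume b: "b = lead r"
  have "\<forall>k\<in>{0..b}. (True#r) ! k" using lead_nth b by (auto simp: nth_Cons split: nat.splits)
  moreover have "Suc b = length (True#r) \<or> \<not> (True#r) ! Suc b"
    using lead_stop[of r] lead_le[of r] b by force
  moreover have "b < length (True#r)" using lead_le[of r] b by simp
  ultimately show "(0, b) \<in> one_runs (True#r)" unfolding one_runs_def by auto
qed

lemma runs_0r: "(0, b) \<in> one_runs r \<longleftrightarrow> lead r \<noteq> 0 \<and> b = lead r - 1"
proof (cases r)
  case Nil thus ?thesis unfolding one_runs_def by auto
next
  case (Cons c s)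
  show ?thesis
  proof (cases c)
    case True thus ?thesis using Cons runs_0T by auto
  next
    case False thus ?thesis using Cons runs_0F by auto
  qed
qed

lemma one_runs_fin: "finite (one_runs d)"
proof -
  have "one_runs d \<subseteq> {..<length d} \<times> {..<length d}" unfolding one_runs_def by auto
  thus ?thesis by (rule finite_subset) auto
qed

definition shp :: "nat \<times> nat \<Rightarrow> nat \<times> nat" where "shp z = (Suc (fst z), Suc (snd z))"

lemma inj_shp: "inj shp" unfolding inj_def shp_def by auto

lemma shp_mem: "(Suc a, Suc b) \<in> shp ` X \<longleftrightarrow> (a,b) \<in> X"
proof
  assume "(Suc a, Suc b) \<in> shp ` X"
  then obtain z where "z \<in> X" "(Suc a, Suc b) = shp z" by blast
  thus "(a,b) \<in> X" by (cases z) (auto simp: shp_def)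
next
  assume "(a,b) \<in> X"
  thus "(Suc a, Suc b) \<in> shp ` X" by (rule image_eqI[rotated]) (simp add: shp_def)
qed

lemma shp_0: "(0, b) \<notin> shp ` X" "(a, 0) \<notin> shp ` X" by (auto simp: shp_def)

lemma one_runs_F: "one_runs (False#r) = shp ` one_runs r"
proof (rule set_eqI)
  fix z :: "nat \<times> nat"
  obtain a b where z: "z = (a,b)" by fastforce
  show "z \<in> one_runs (False#r) \<longleftrightarrow> z \<in> shp ` one_runs r"
    unfolding z using runs_Suc runs_Suc0 runs_0F shp_mem shp_0
    by (cases a; cases b) auto
qed

lemma one_runs_T: "one_runs (True#r) = insert (0, lead r) (shp ` {z\<in>one_runs r. fst z \<noteq> 0})"
proof (rule set_eqI)
  fix z :: "nat \<times> nat"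
  obtain a b where z: "z = (a,b)" by fastforce
  show "z \<in> one_runs (True#r) \<longleftrightarrow> z \<in> insert (0, lead r) (shp ` {z\<in>one_runs r. fst z \<noteq> 0})"
    unfolding z using runs_Suc runs_Suc0 runs_0T shp_mem[of _ _ "{z\<in>one_runs r. fst z \<noteq> 0}"] shp_0
    by (cases a; cases b) auto
qed

lemma card_len_F: "card {z\<in>one_runs (False#r). Q (Suc (snd z) - fst z)} = card {z\<in>one_runs r. Q (Suc (snd z) - fst z)}"
proof -
  have "{z\<in>one_runs (False#r). Q (Suc (snd z) - fst z)} = shp ` {z\<in>one_runs r. Q (Suc (snd z) - fst z)}"
    unfolding one_runs_F by (auto simp: shp_def)
  thus ?thesis by (simp add: card_image inj_on_subset[OF inj_shp])
qed

lemma card_len_T: "int (card {z\<in>one_runs (True#r). Q (Suc (snd z) - fst z)}) =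
   int (card {z\<in>one_runs r. Q (Suc (snd z) - fst z)}) - (if lead r \<noteq> 0 \<and> Q (lead r) then 1 else 0)
   + (if Q (Suc (lead r)) then 1 else 0)"
proof -
  let ?A = "{z\<in>one_runs r. fst z \<noteq> 0 \<and> Q (Suc (snd z) - fst z)}"
  let ?B = "{z\<in>one_runs r. fst z = 0 \<and> Q (Suc (snd z) - fst z)}"
  have fA: "finite ?A" "finite ?B" using one_runs_fin by auto
  have "{z\<in>one_runs r. Q (Suc (snd z) - fst z)} = ?A \<union> ?B" by auto
  hence c1: "card {z\<in>one_runs r. Q (Suc (snd z) - fst z)} = card ?A + card ?B"
    using fA by (simp add: card_Un_disjoint disjoint_iff)
  have "?B = (if lead r \<noteq> 0 \<and> Q (lead r) then {(0, lead r - 1)} else {})"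
  proof (rule set_eqI)
    fix z :: "nat \<times> nat"
    obtain a b where z: "z = (a,b)" by fastforce
    show "z \<in> ?B \<longleftrightarrow> z \<in> (if lead r \<noteq> 0 \<and> Q (lead r) then {(0, lead r - 1)} else {})"
      unfolding z using runs_0r[of b r] by auto
  qed
  hence c2: "card ?B = (if lead r \<noteq> 0 \<and> Q (lead r) then 1 else 0)" by simp
  have e: "{z\<in>one_runs (True#r). Q (Suc (snd z) - fst z)} =
     (if Q (Suc (lead r)) then insert (0, lead r) (shp ` ?A) else shp ` ?A)"
    unfolding one_runs_T by (auto simp: shp_def)
  have nin: "(0, lead r) \<notin> shp ` ?A" by (auto simp: shp_def)
  have cA: "card (shp ` ?A) = card ?A" by (simp add: card_image inj_on_subset[OF inj_shp])
  show ?thesis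
    using c1 c2 cA nin fA by (simp add: e)
qed

lemma sm_ok: "int (card (one_runs d)) = sm d"
proof (induction d)
  case Nil thus ?case by (simp add: one_runs_def)
next
  case (Cons b r)
  have "int (card (one_runs r)) = int (card {z\<in>one_runs r. (\<lambda>_. True) (Suc (snd z) - fst z)})" by simp
  show ?case
  proof (cases b)
    case True
    thus ?thesis using card_len_T[where Q="\<lambda>_. True" and r=r] Cons by simp
  next
    case False
    thus ?thesis using card_len_F[where Q="\<lambda>_. True" and r=r] Cons by simp
  qed
qed

lemma runs_len_eq: "num_runs_len d i = card {z\<in>one_runs d. Suc (snd z) - fst z = i}"
  unfolding num_runs_len_def by (simp add: case_prod_beta')

lemma sm1_ok: "int (num_runs_len d 1) = sm1 d"
proof (induction d)
  case Nil thus ?case by (simp add: num_runs_len_def one_runs_def)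
next
  case (Cons b r)
  show ?case
  proof (cases b)
    case True
    thus ?thesis using card_len_T[where Q="\<lambda>l. l = 1" and r=r] Cons by (simp add: runs_len_eq)
  next
    case False
    thus ?thesis using card_len_F[where Q="\<lambda>l. l = 1" and r=r] Cons by (simp add: runs_len_eq)
  qed
qed

lemma sm2_ok: "int (num_runs_len d 2) = sm2 d"
proof (induction d)
  case Nil thus ?case by (simp add: num_runs_len_def one_runs_def)
next
  case (Cons b r)
  show ?case
  proof (cases b)
    case True
    thus ?thesis using card_len_T[where Q="\<lambda>l. l = 2" and r=r] Cons by (simp add: runs_len_eq)
  next
    case False
    thus ?thesis using card_len_F[where Q="\<lambda>l. l = 2" and r=r] Cons by (simp add: runs_len_eq)
  qed
qed

lemma sw_ok: "int (weight d) = sw d"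
  unfolding weight_def by (induction d) auto


lemma deriv_len: "length (deriv_seq x) = length x - 1"
  unfolding deriv_seq_def by simp

lemma deriv_nth: "p < length x - 1 \<Longrightarrow> deriv_seq x ! p = (x ! p \<noteq> x ! Suc p)"
  unfolding deriv_seq_def by (simp add: nth_tl)

lemma weight_card: "weight w = card {p. p < length w \<and> w ! p}"
  unfolding weight_def by (simp add: length_filter_conv_card)

lemma weight_deriv: "weight (deriv_seq y) = card {p. p < length y - 1 \<and> y ! p \<noteq> y ! Suc p}"
  unfolding weight_card deriv_len by (rule arg_cong[where f=card]) (auto simp: deriv_nth)

lemma phi_len: "length (phi n E x) = n" unfolding phi_def by simp

lemma phi_nth: "i < n \<Longrightarrow> phi n E x ! i = (if Suc i \<in> E then x ! (i - 1) else x ! i)"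
  unfolding phi_def by (simp add: nth_upt del: upt_Suc)

definition Es :: "nat set \<Rightarrow> nat set" where "Es S = (\<lambda>p. Suc (Suc p)) ` S"

lemma Es_mem: "Suc i \<in> Es S \<longleftrightarrow> (0 < i \<and> i - 1 \<in> S)"
  unfolding Es_def by (cases i) auto

lemma phi_Es_nth: "i < n \<Longrightarrow> phi n (Es S) x ! i = (if 0 < i \<and> i - 1 \<in> S then x ! (i - 1) else x ! i)"
  by (simp add: phi_nth Es_mem)

lemma card_Es: "card (Es S) = card S"
  unfolding Es_def by (rule card_image) (auto simp: inj_on_def)

context
  fixes n :: nat and x :: "bool list"
  assumes lx: "length x = n"
begin

definition dd where "dd = deriv_seq x"

lemma dd_len: "length dd = n - 1" using lx by (simp add: dd_def deriv_len)
lemma dd_nth: "p < n - 1 \<Longrightarrow> dd ! p = (x ! p \<noteq> x ! Suc p)" using lx by (simp add: dd_def deriv_nth)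

lemma Vs_dd: "S \<in> Vs dd \<longleftrightarrow> (\<forall>p\<in>S. p < n - 1 \<and> x ! p \<noteq> x ! Suc p \<and> Suc p \<notin> S)"
  unfolding Vs_def using dd_len dd_nth by auto

lemma Phi_eq: "Phi n 3 x = (\<lambda>S. phi n (Es S) x) ` {S\<in>Vs dd. card S \<le> 3}"
proof
  show "Phi n 3 x \<subseteq> (\<lambda>S. phi n (Es S) x) ` {S\<in>Vs dd. card S \<le> 3}"
  proof
    fix y assume "y \<in> Phi n 3 x"
    then obtain E where y: "y = phi n E x" and g: "grain_pattern n E" and cE: "card E \<le> 3"
      unfolding Phi_def by blast
    have E2: "E \<subseteq> {2..n}" "\<forall>j\<in>E. Suc j \<notin> E" using g unfolding grain_pattern_def by auto
    let ?S = "{p. Suc (Suc p) \<in> E \<and> x ! p \<noteq> x ! Suc p}"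
    have SV: "?S \<in> Vs dd" unfolding Vs_dd using E2 by fastforce
    have "Es ?S \<subseteq> E" unfolding Es_def by auto
    hence "card (Es ?S) \<le> card E" using E2 by (meson card_mono finite_atLeastAtMost finite_subset)
    hence cS: "card ?S \<le> 3" using cE card_Es by simp
    have "phi n E x = phi n (Es ?S) x"
    proof (rule nth_equalityI)
      show "length (phi n E x) = length (phi n (Es ?S) x)" by (simp add: phi_len)
    next
      fix i assume "i < length (phi n E x)"
      hence i: "i < n" by (simp add: phi_len)
      show "phi n E x ! i = phi n (Es ?S) x ! i"
      proof (cases "Suc i \<in> E")
        case True
        hence i0: "0 < i" using E2 by force
        have "Suc (Suc (i - 1)) = Suc i" using i0 by simp
        hence "Suc i \<in> Es ?S \<longleftrightarrow> x ! (i - 1) \<noteq> x ! Suc (i - 1)" using True i0 by (simp add: Es_mem)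
        moreover have "Suc (i - 1) = i" using i0 by simp
        ultimately have "Suc i \<in> Es ?S \<longleftrightarrow> x ! (i - 1) \<noteq> x ! i" by simp
        thus ?thesis using True i by (auto simp: phi_nth)
      next
        case False
        have "Suc i \<notin> Es ?S"
        proof
          assume "Suc i \<in> Es ?S"
          hence "0 < i" "Suc (Suc (i - 1)) \<in> E" by (auto simp: Es_mem)
          thus False using False by simp
        qed
        thus ?thesis using i False by (auto simp: phi_nth)
      qed
    qed
    thus "y \<in> (\<lambda>S. phi n (Es S) x) ` {S\<in>Vs dd. card S \<le> 3}" using y SV cS by blast
  qed
next
  show "(\<lambda>S. phi n (Es S) x) ` {S\<in>Vs dd. card S \<le> 3} \<subseteq> Phi n 3 x"
  proof
    fix y assume "y \<in> (\<lambda>S. phi n (Es S) x) ` {S\<in>Vs dd. card S \<le> 3}"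
    then obtain S where y: "y = phi n (Es S) x" and S: "S \<in> Vs dd" "card S \<le> 3" by blast
    have "grain_pattern n (Es S)" using S(1) unfolding Vs_dd grain_pattern_def Es_def by fastforce
    moreover have "card (Es S) \<le> 3" using S(2) card_Es by simp
    ultimately show "y \<in> Phi n 3 x" unfolding Phi_def using y by blast
  qed
qed

lemma phi_inj: "inj_on (\<lambda>S. phi n (Es S) x) (Vs dd)"
proof (rule inj_onI, rule ccontr)
  fix S S' assume S: "S \<in> Vs dd" "S' \<in> Vs dd" and eq: "phi n (Es S) x = phi n (Es S') x" and ne: "S \<noteq> S'"
  have key: "False" if A: "A \<in> Vs dd" "A' \<in> Vs dd" "phi n (Es A) x = phi n (Es A') x" "p \<in> A" "p \<notin> A'" for A A' p
  proof -
    have p: "p < n - 1" "x ! p \<noteq> x ! Suc p" using A(1,4) unfolding Vs_dd by auto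
    have "phi n (Es A) x ! Suc p = x ! p" using p A(4) by (simp add: phi_Es_nth)
    moreover have "phi n (Es A') x ! Suc p = x ! Suc p" using p A(5) by (simp add: phi_Es_nth)
    ultimately show False using A(3) p(2) by simp
  qed
  from ne obtain p where "(p \<in> S \<and> p \<notin> S') \<or> (p \<in> S' \<and> p \<notin> S)" by blast
  thus False using key[OF S(1) S(2) eq] key[OF S(2) S(1) eq[symmetric]] by blast
qed

definition TT :: "nat set \<Rightarrow> nat" where "TT S = card {p\<in>S. Suc p = length dd}"

lemma weight_phi:
  assumes S: "S \<in> Vs dd"
  shows "int (weight (deriv_seq (phi n (Es S) x))) = int (weight dd) - 2 * int (Ic dd S) - int (TT S)"
proof -
  let ?y = "phi n (Es S) x"
  have yn: "length ?y = n" by (simp add: phi_len)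
  let ?D = "{p. p < n - 1 \<and> dd ! p}"
  let ?Dy = "{p. p < n - 1 \<and> ?y ! p \<noteq> ?y ! Suc p}"
  have wd: "weight dd = card ?D" unfolding weight_card dd_len by simp
  have wy: "weight (deriv_seq ?y) = card ?Dy" unfolding weight_deriv yn by simp
  have SD: "S \<subseteq> ?D" and nc: "\<forall>p\<in>S. Suc p \<notin> S" using S dd_nth unfolding Vs_dd by auto
  let ?A1 = "?D - S - Suc ` S"
  let ?A2 = "{p\<in>Suc ` S. p < n - 1 \<and> \<not> dd ! p}"
  have Dy: "?Dy = ?A1 \<union> ?A2"
  proof (rule set_eqI)
    fix p
    show "p \<in> ?Dy \<longleftrightarrow> p \<in> ?A1 \<union> ?A2"
    proof (cases "p < n - 1")
      case False thus ?thesis by auto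
    next
      case pn: True
      have yp: "?y ! p = (if 0 < p \<and> p - 1 \<in> S then x ! (p - 1) else x ! p)" using pn by (simp add: phi_Es_nth)
      have ys: "?y ! Suc p = (if p \<in> S then x ! p else x ! Suc p)" using pn by (simp add: phi_Es_nth)
      have dp: "dd ! p = (x ! p \<noteq> x ! Suc p)" using pn dd_nth by simp
      have inSS: "p \<in> Suc ` S \<longleftrightarrow> 0 < p \<and> p - 1 \<in> S"
        by (cases p) auto
      show ?thesis
      proof (cases "p \<in> S")
        case True
        have np: "\<not> (0 < p \<and> p - 1 \<in> S)" 
        proof
          assume h: "0 < p \<and> p - 1 \<in> S"
          hence "Suc (p - 1) \<notin> S" using nc by blast
          thus False using h True by simp
        qed
        have "?y ! p = x ! p" using yp np by (simp only: if_False)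
        moreover have "?y ! Suc p = x ! p" using ys True by simp
        ultimately have "p \<notin> ?Dy" by simp
        moreover have "p \<notin> ?A1 \<union> ?A2" using True np inSS by blast
        ultimately show ?thesis by (simp only:)
      next
        case pS: False
        show ?thesis
        proof (cases "0 < p \<and> p - 1 \<in> S")
          case True
          have "p - 1 < n - 1" "x ! (p - 1) \<noteq> x ! Suc (p - 1)" using True S unfolding Vs_dd by auto
          hence xx: "x ! (p - 1) \<noteq> x ! p" using True by simp
          have "?y ! p = x ! (p - 1)" "?y ! Suc p = x ! Suc p" using yp ys True pS by simp_all
          hence "p \<in> ?Dy \<longleftrightarrow> \<not> dd ! p" using xx dp pn by auto
          moreover have "p \<in> ?A1 \<union> ?A2 \<longleftrightarrow> \<not> dd ! p" using True inSS pn by blast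
          ultimately show ?thesis by (simp only:)
        next
          case False
          have "?y ! p = x ! p" using yp False by (simp only: if_False)
          moreover have "?y ! Suc p = x ! Suc p" using ys pS by simp
          ultimately have "p \<in> ?Dy \<longleftrightarrow> dd ! p" using dp pn by auto
          moreover have "p \<in> ?A1 \<union> ?A2 \<longleftrightarrow> dd ! p" using False pS inSS pn by blast
          ultimately show ?thesis by (simp only:)
        qed
      qed
    qed
  qed
  have fD: "finite ?D" by simp
  have disj: "?A1 \<inter> ?A2 = {}" by auto
  have c1: "card Dy' = card ?A1 + card ?A2" if "Dy' = ?A1 \<union> ?A2" for Dy'
    using that disj by (simp add: card_Un_disjoint)
  have DS: "card ?D = card S + card (?D \<inter> Suc ` S) + card ?A1"
  proof -
    have "?D = S \<union> (?D \<inter> Suc ` S) \<union> ?A1" using SD by auto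
    moreover have "S \<inter> (?D \<inter> Suc ` S) = {}" using nc by auto
    moreover have "finite S" using S Vs_fin by blast
    ultimately have e3: "?D = (S \<union> (?D \<inter> Suc ` S)) \<union> ?A1" "finite (S \<union> (?D \<inter> Suc ` S))" "finite ?A1"
      by (auto simp del: Un_iff)
    have "card ((S \<union> (?D \<inter> Suc ` S)) \<union> ?A1) = card (S \<union> (?D \<inter> Suc ` S)) + card ?A1"
      by (rule card_Un_disjoint) (use e3 in auto)
    hence "card ?D = card (S \<union> (?D \<inter> Suc ` S)) + card ?A1" using e3(1) by simp
    also have "card (S \<union> (?D \<inter> Suc ` S)) = card S + card (?D \<inter> Suc ` S)"
      by (rule card_Un_disjoint) (use \<open>finite S\<close> \<open>S \<inter> (?D \<inter> Suc ` S) = {}\<close> in auto)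
    finally show ?thesis .
  qed
  have finS: "finite S" using S Vs_fin by blast
  have I1: "card (?D \<inter> Suc ` S) = Ic dd S"
  proof -
    have "?D \<inter> Suc ` S = Suc ` {p\<in>S. Suc p < length dd \<and> dd ! Suc p}" using dd_len by auto
    thus ?thesis unfolding Ic_def by (simp add: card_image)
  qed
  let ?J = "{p\<in>S. Suc p < length dd \<and> \<not> dd ! Suc p}"
  have I2: "card ?A2 = card ?J"
  proof -
    have "?A2 = Suc ` ?J" using dd_len by auto
    thus ?thesis by (simp add: card_image)
  qed
  have I3: "card S = Ic dd S + card ?J + TT S"
  proof -
    have SS: "S = {p\<in>S. Suc p < length dd \<and> dd ! Suc p} \<union> ?J \<union> {p\<in>S. Suc p = length dd}"
      using SD dd_len by auto
    have f: "finite {p\<in>S. Suc p < length dd \<and> dd ! Suc p}" "finite ?J" "finite {p\<in>S. Suc p = length dd}"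
      using finS by auto
    have "card S = card ({p\<in>S. Suc p < length dd \<and> dd ! Suc p} \<union> ?J) + card {p\<in>S. Suc p = length dd}"
      by (subst SS, rule card_Un_disjoint) (use f in auto)
    also have "card ({p\<in>S. Suc p < length dd \<and> dd ! Suc p} \<union> ?J) = Ic dd S + card ?J"
      unfolding Ic_def by (rule card_Un_disjoint) (use f in auto)
    finally show ?thesis unfolding TT_def by simp
  qed
  show ?thesis using wd wy c1[OF Dy] DS I1 I2 I3 by simp
qed

lemma TT_le: "TT S \<le> 1"
proof -
  have "{p\<in>S. Suc p = length dd} \<subseteq> {length dd - 1}" by auto
  from card_mono[OF _ this] show ?thesis unfolding TT_def by simp
qed

lemma Ic_TT_le: "S \<in> Vs dd \<Longrightarrow> Ic dd S + TT S \<le> card S"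
proof -
  assume S: "S \<in> Vs dd"
  have f: "finite S" using S Vs_fin by blast
  have "Ic dd S + TT S = card ({p\<in>S. Suc p < length dd \<and> dd ! Suc p} \<union> {p\<in>S. Suc p = length dd})"
    unfolding Ic_def TT_def by (rule card_Un_disjoint[symmetric]) (use f in auto)
  also have "\<dots> \<le> card S" by (rule card_mono) (use f in auto)
  finally show ?thesis .
qed

end

lemma Ksum: "card {S\<in>Vs d. card S \<le> 3 \<and> Ic d S = k} = FF d 0 k + FF d 1 k + FF d 2 k + FF d 3 k"
proof -
  let ?A = "\<lambda>a. {S\<in>Vs d. card S = a \<and> Ic d S = k}"
  have e: "{S\<in>Vs d. card S \<le> 3 \<and> Ic d S = k} = ?A 0 \<union> ?A 1 \<union> ?A 2 \<union> ?A 3" by auto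
  have f: "finite (?A a)" for a using finite_Vs by auto
  have "card (?A 0 \<union> ?A 1 \<union> ?A 2 \<union> ?A 3) = card (?A 0 \<union> ?A 1 \<union> ?A 2) + card (?A 3)"
    by (rule card_Un_disjoint) (use f in auto)
  also have "card (?A 0 \<union> ?A 1 \<union> ?A 2) = card (?A 0 \<union> ?A 1) + card (?A 2)"
    by (rule card_Un_disjoint) (use f in auto)
  also have "card (?A 0 \<union> ?A 1) = card (?A 0) + card (?A 1)"
    by (rule card_Un_disjoint) (use f in auto)
  finally show ?thesis unfolding e FF_def by simp
qed

context
  fixes n :: nat and x :: "bool list"
  assumes lx: "length x = n"
begin

lemma B_eq: "card {y \<in> Phi n 3 x. int (weight (deriv_seq y)) = int (weight (deriv_seq x)) - int j}
   = card {S\<in>Vs (dd x). card S \<le> 3 \<and> 2 * Ic (dd x) S + TT x S = j}"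
proof -
  let ?f = "\<lambda>S. phi n (Es S) x"
  have "{y \<in> Phi n 3 x. int (weight (deriv_seq y)) = int (weight (deriv_seq x)) - int j}
     = ?f ` {S\<in>Vs (dd x). card S \<le> 3 \<and> 2 * Ic (dd x) S + TT x S = j}"
  proof -
    have "{y \<in> ?f ` {S\<in>Vs (dd x). card S \<le> 3}. int (weight (deriv_seq y)) = int (weight (deriv_seq x)) - int j}
       = ?f ` {S\<in>{S\<in>Vs (dd x). card S \<le> 3}. int (weight (deriv_seq (?f S))) = int (weight (deriv_seq x)) - int j}"
      by blast
    also have "{S\<in>{S\<in>Vs (dd x). card S \<le> 3}. int (weight (deriv_seq (?f S))) = int (weight (deriv_seq x)) - int j}
       = {S\<in>Vs (dd x). card S \<le> 3 \<and> 2 * Ic (dd x) S + TT x S = j}"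
    proof (rule Collect_cong)
      fix S
      show "(S \<in> {S\<in>Vs (dd x). card S \<le> 3} \<and> int (weight (deriv_seq (?f S))) = int (weight (deriv_seq x)) - int j)
        \<longleftrightarrow> (S \<in> Vs (dd x) \<and> card S \<le> 3 \<and> 2 * Ic (dd x) S + TT x S = j)"
      proof (cases "S \<in> Vs (dd x)")
        case True
        have "int (weight (deriv_seq (?f S))) = int (weight (deriv_seq x)) - 2 * int (Ic (dd x) S) - int (TT x S)"
          using weight_phi[OF lx True] by (simp add: dd_def)
        thus ?thesis using True by auto
      next
        case False thus ?thesis by simp
      qed
    qed
    finally show ?thesis using Phi_eq[OF lx] by simp
  qed
  moreover have "inj_on ?f {S\<in>Vs (dd x). card S \<le> 3 \<and> 2 * Ic (dd x) S + TT x S = j}"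
    by (rule inj_on_subset[OF phi_inj[OF lx]]) auto
  ultimately show ?thesis by (simp add: card_image)
qed

lemma pair: "card {S\<in>Vs (dd x). card S \<le> 3 \<and> 2 * Ic (dd x) S + TT x S = 2 * k}
   + card {S\<in>Vs (dd x). card S \<le> 3 \<and> 2 * Ic (dd x) S + TT x S = 2 * k + 1}
   = card {S\<in>Vs (dd x). card S \<le> 3 \<and> Ic (dd x) S = k}"
proof -
  have e: "{S\<in>Vs (dd x). card S \<le> 3 \<and> Ic (dd x) S = k} =
     {S\<in>Vs (dd x). card S \<le> 3 \<and> 2 * Ic (dd x) S + TT x S = 2 * k}
   \<union> {S\<in>Vs (dd x). card S \<le> 3 \<and> 2 * Ic (dd x) S + TT x S = 2 * k + 1}"
    unfolding Un_def mem_Collect_eq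
  proof (rule Collect_cong)
    fix S
    have "TT x S \<le> 1" by (rule TT_le[OF lx])
    thus "(S \<in> Vs (dd x) \<and> card S \<le> 3 \<and> Ic (dd x) S = k) \<longleftrightarrow>
      (S \<in> Vs (dd x) \<and> card S \<le> 3 \<and> 2 * Ic (dd x) S + TT x S = 2 * k \<or>
       S \<in> Vs (dd x) \<and> card S \<le> 3 \<and> 2 * Ic (dd x) S + TT x S = 2 * k + 1)" by arith
  qed
  show ?thesis unfolding e by (rule card_Un_disjoint[symmetric]) (use finite_Vs in auto)
qed

lemma six: "card {S\<in>Vs (dd x). card S \<le> 3 \<and> 2 * Ic (dd x) S + TT x S = 6}
   = card {S\<in>Vs (dd x). card S \<le> 3 \<and> Ic (dd x) S = 3}"
proof -
  have "{S\<in>Vs (dd x). card S \<le> 3 \<and> 2 * Ic (dd x) S + TT x S = 6} = {S\<in>Vs (dd x). card S \<le> 3 \<and> Ic (dd x) S = 3}"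
  proof (rule Collect_cong, rule iffI)
    fix S assume "S \<in> Vs (dd x) \<and> card S \<le> 3 \<and> 2 * Ic (dd x) S + TT x S = 6"
    thus "S \<in> Vs (dd x) \<and> card S \<le> 3 \<and> Ic (dd x) S = 3" using TT_le[OF lx, of S] by linarith
  next
    fix S assume S: "S \<in> Vs (dd x) \<and> card S \<le> 3 \<and> Ic (dd x) S = 3"
    thus "S \<in> Vs (dd x) \<and> card S \<le> 3 \<and> 2 * Ic (dd x) S + TT x S = 6" using Ic_TT_le[OF lx, of S] by linarith
  qed
  thus ?thesis by simp
qed

end

lemma two_choose: "2 * int (N choose 2) = int N * (int N - 1)"
proof (induction N)
  case 0 thus ?case by simp
next
  case (Suc N)
  have "Suc N choose 2 = (N choose 1) + (N choose 2)"
    by (metis Suc_1 binomial_Suc_Suc One_nat_def)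
  thus ?case using Suc by (simp add: algebra_simps)
qed

lemma three_choose: "6 * int (N choose 3) = int N * (int N - 1) * (int N - 2)"
proof (induction N)
  case 0 thus ?case by simp
next
  case (Suc N)
  have "Suc N choose 3 = (N choose 2) + (N choose 3)"
    by (metis binomial_Suc_Suc numeral_2_eq_2 numeral_3_eq_3)
  thus ?case using Suc two_choose[of N] by (simp add: algebra_simps)
qed


theorem lemma4p4:
  fixes n :: nat and x :: "bool list"
  assumes "n \<ge> 1" and "length x = n"
  defines "\<omega> \<equiv> weight (deriv_seq x)"
    and "m \<equiv> card (one_runs (deriv_seq x))"
    and "m1 \<equiv> num_runs_len (deriv_seq x) 1"
    and "m2 \<equiv> num_runs_len (deriv_seq x) 2"
    and "B \<equiv> \<lambda>j::nat. card {y \<in> Phi n 3 x. int (weight (deriv_seq y)) = int (weight (deriv_seq x)) - int j}"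
  shows "(int (B 0 + B 1) = 1 + int m + int (m choose 2) + int (m choose 3))
    \<and> (int (B 2 + B 3) = (int \<omega> - int m) * (1 + int m + int (m choose 2)) - int m * (int m - int m1))
    \<and> (int (B 4 + B 5) = (1 + int m) * (int ((\<omega> - m) choose 2) - (int \<omega> - int m))
           - (int \<omega> - 2 * int m - 3) * (int m - int m1) - int m2)
    \<and> (int (B 6) = int ((\<omega> - m) choose 3) - (int \<omega> - int m) * (int \<omega> - int m + 1)
           + (int \<omega> - int m) * (int m - int m1) + 4 * (int \<omega> - 2 * int m + int m1) + int m2)"
proof -
  note lx = assms(2)
  define d where "d = deriv_seq x"
  have ddx: "dd x = d" unfolding d_def by (simp add: dd_def)
  have Bj: "B j = card {S\<in>Vs d. card S \<le> 3 \<and> 2 * Ic d S + TT x S = j}" for j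
    unfolding B_def using B_eq[OF lx, of j] ddx by simp
  have K: "int (B (2 * k) + B (2 * k + 1)) = int (FF d 0 k) + int (FF d 1 k) + int (FF d 2 k) + int (FF d 3 k)" for k
    using pair[OF lx, of k] Ksum[of d k] ddx Bj by simp
  have K0: "int (B 0 + B 1) = int (FF d 0 0) + int (FF d 1 0) + int (FF d 2 0) + int (FF d 3 0)"
    using K[of 0] by simp
  have K1: "int (B 2 + B 3) = int (FF d 1 1) + int (FF d 2 1) + int (FF d 3 1)"
    using K[of 1] FF_zero[of 0 1 d] by simp
  have K2: "int (B 4 + B 5) = int (FF d 2 2) + int (FF d 3 2)"
    using K[of 2] FF_zero[of 0 2 d] FF_zero[of 1 2 d] by simp
  have K3: "int (B 6) = int (FF d 3 3)"
    using six[OF lx] Ksum[of d 3] ddx Bj[of 6] FF_zero[of 0 3 d] FF_zero[of 1 3 d] FF_zero[of 2 3 d] by simp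
  have cf: "CF d" by (rule CF_all)
  have sw: "int \<omega> = sw d" unfolding \<omega>_def d_def by (rule sw_ok)
  have sm: "int m = sm d" unfolding m_def d_def by (rule sm_ok)
  have sm1: "int m1 = sm1 d" unfolding m1_def d_def by (rule sm1_ok)
  have sm2: "int m2 = sm2 d" unfolding m2_def d_def by (rule sm2_ok)
  define W where "W = int \<omega> - int m"
  define M where "M = int m"
  define P where "P = int m - int m1"
  define Q where "Q = int m2"
  have f00: "int (FF d 0 0) = 1" and f10: "int (FF d 1 0) = M"
    and f20: "2 * int (FF d 2 0) = M * (M - 1)" and f30: "6 * int (FF d 3 0) = M * (M - 1) * (M - 2)"
    and f11: "int (FF d 1 1) = W" and f21: "int (FF d 2 1) = W * M - P"
    and f31: "2 * int (FF d 3 1) = W * M * (M - 1) - 2 * P * (M - 1)"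
    and f22: "2 * int (FF d 2 2) = W * (W - 1) - 2 * (W - P)"
    and f32: "2 * int (FF d 3 2) = M * (W * (W - 1) - 2 * W + 2 * P) - 2 * P * (W - 2) - 2 * Q"
    and f33: "6 * int (FF d 3 3) = W * (W - 1) * (W - 2) - 6 * W * (W + 1) + 6 * W * P + 24 * (W - P) + 6 * Q"
    using cf unfolding CF_def Let_def W_def M_def P_def Q_def sw sm sm1 sm2 by auto
  have Wge: "W \<ge> 0" using f11 by simp
  hence wm: "int (\<omega> - m) = W" unfolding W_def by simp
  have c2m: "2 * int (m choose 2) = M * (M - 1)" unfolding M_def by (rule two_choose)
  have c3m: "6 * int (m choose 3) = M * (M - 1) * (M - 2)" unfolding M_def by (rule three_choose)
  have c2w: "2 * int ((\<omega> - m) choose 2) = W * (W - 1)" using two_choose[of "\<omega> - m"] wm by simp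
  have c3w: "6 * int ((\<omega> - m) choose 3) = W * (W - 1) * (W - 2)" using three_choose[of "\<omega> - m"] wm by simp
  have om: "int \<omega> = W + M" unfolding W_def M_def by simp
  have m1e: "int m1 = M - P" unfolding M_def P_def by simp
  have a: "int (B 0 + B 1) = 1 + int m + int (m choose 2) + int (m choose 3)"
    using K0 f00 f10 f20 f30 c2m c3m unfolding M_def by linarith
  have b: "int (B 2 + B 3) = (int \<omega> - int m) * (1 + int m + int (m choose 2)) - int m * (int m - int m1)"
  proof -
    have "2 * int (B 2 + B 3) = 2 * ((int \<omega> - int m) * (1 + int m + int (m choose 2)) - int m * (int m - int m1))"
      unfolding K1 om m1e M_def[symmetric]
    proof -
      let ?X1 = "int (FF d 1 1)" and ?X2 = "int (FF d 2 1)" and ?X3 = "int (FF d 3 1)" and ?C = "int (m choose 2)"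
      have "2 * (?X1 + ?X2 + ?X3) - 2 * ((W + M - M) * (1 + M + ?C) - M * (M - (M - P))) =
        (2 * ?X3 - (W * M * (M - 1) - 2 * P * (M - 1))) - W * (2 * ?C - M * (M - 1)) + 2 * (?X1 - W) + 2 * (?X2 - (W * M - P))"
        by (simp add: algebra_simps)
      also have "\<dots> = 0" using f11 f21 f31 c2m by simp
      finally show "2 * (?X1 + ?X2 + ?X3) = 2 * ((W + M - M) * (1 + M + ?C) - M * (M - (M - P)))" by simp
    qed
    thus ?thesis by simp
  qed
  have c: "int (B 4 + B 5) = (1 + int m) * (int ((\<omega> - m) choose 2) - (int \<omega> - int m))
           - (int \<omega> - 2 * int m - 3) * (int m - int m1) - int m2"
  proof -
    have "2 * int (B 4 + B 5) = 2 * ((1 + int m) * (int ((\<omega> - m) choose 2) - (int \<omega> - int m))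
           - (int \<omega> - 2 * int m - 3) * (int m - int m1) - int m2)"
      unfolding K2 om m1e M_def[symmetric] Q_def[symmetric] using f22 f32 c2w by algebra
    thus ?thesis by simp
  qed
  have dd: "int (B 6) = int ((\<omega> - m) choose 3) - (int \<omega> - int m) * (int \<omega> - int m + 1)
           + (int \<omega> - int m) * (int m - int m1) + 4 * (int \<omega> - 2 * int m + int m1) + int m2"
  proof -
    have "6 * int (B 6) = 6 * (int ((\<omega> - m) choose 3) - (int \<omega> - int m) * (int \<omega> - int m + 1)
           + (int \<omega> - int m) * (int m - int m1) + 4 * (int \<omega> - 2 * int m + int m1) + int m2)"
      unfolding K3 om m1e M_def[symmetric] Q_def[symmetric] using f33 c3w by algebra
    thus ?thesis by simp
  qed
  show ?thesis using a b c dd by blast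
qed


end
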